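(* Let $k\ge 2$ and $D=\{1,\dots,k\}$. Each of the following cost functions on $D$ has a $k$-submodular discrete relaxation on the domain $\{0,1,\dots,k\}$: (1) any unary function $f:D\to\mathbb{R}$; (2) the soft version of the constraint $(x=\pi(y))$, for any permutation $\pi$ of $D$; (3) the soft version of the constraint $(x=d\lor y=d')$, for $d,d'\in D$; (4) the soft version of the constraint $(x_1=\dots=x_r)$, for any $r$. The scaling factor in all cases is $2$.
   Context: The soft version of a relation $R$ is the cost function taking value $0$ on tuples in $R$ and $1$ otherwise. A discrete relaxation of $f:D^r\to\mathbb{R}$ on $D'\supset D$ is $f':(D')^r\to\mathbb{R}$ with $\min f'=\min f$ and $f'=f$ on $D^r$. The scaling factor is the smallest rational $c$ such that $c\cdot f'$ is integral (for integer-valued $f$). With $\sqcap,\sqcup$ on $\{0,\dots,k\}$ given by $0\sqcap x=0$, $0\sqcup x=x$, $x\sqcap x=x\sqcup x=x$ and $x\sqcap y=x\sqcup y=0$ for distinct nonzero $x,y$, a function $f'$ is $k$-submodular if $f'(X)+f'(Y)\ge f'(X\sqcap Y)+f'(X\sqcup Y)$ for all $X,Y$, coordinatewise. *)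

theory Defs
  imports Main "HOL-Library.Multiset" Complex_Main
begin

definition tuples :: "nat set \<Rightarrow> nat \<Rightarrow> nat list set" where
  "tuples A r = {xs. length xs = r \<and> set xs \<subseteq> A}"

definition soft :: "(nat list \<Rightarrow> bool) \<Rightarrow> nat list \<Rightarrow> real" where
  "soft R = (\<lambda>xs. if R xs then 0 else 1)"

definition discrete_relaxation :: "nat \<Rightarrow> nat \<Rightarrow> (nat list \<Rightarrow> real) \<Rightarrow> (nat list \<Rightarrow> real) \<Rightarrow> bool" where
  "discrete_relaxation k r f f' \<longleftrightarrow>
     (\<forall>x \<in> tuples {1..k} r. f' x = f x) \<and>
     Min (f' ` tuples {0..k} r) = Min (f ` tuples {1..k} r)"

definition kmeet :: "nat \<Rightarrow> nat \<Rightarrow> nat" where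
  "kmeet x y = (if x = 0 \<or> y = 0 then 0 else if x = y then x else 0)"

definition kjoin :: "nat \<Rightarrow> nat \<Rightarrow> nat" where
  "kjoin x y = (if x = 0 then y else if y = 0 then x else if x = y then x else 0)"

definition k_submodular :: "nat \<Rightarrow> nat \<Rightarrow> (nat list \<Rightarrow> real) \<Rightarrow> bool" where
  "k_submodular k r f' \<longleftrightarrow>
     (\<forall>X \<in> tuples {0..k} r. \<forall>Y \<in> tuples {0..k} r.
        f' X + f' Y \<ge> f' (map2 kmeet X Y) + f' (map2 kjoin X Y))"

text \<open>Scaling factor (at most) 2: 2 f' is integer-valued on D'^r.\<close>
definition half_integral :: "nat \<Rightarrow> nat \<Rightarrow> (nat list \<Rightarrow> real) \<Rightarrow> bool" where
  "half_integral k r f' \<longleftrightarrow> (\<forall>x \<in> tuples {0..k} r. 2 * f' x \<in> \<int>)"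

end

theory Submission
  imports Defs
begin

lemma finite_tuples: "finite A \<Longrightarrow> finite (tuples A r)"
  unfolding tuples_def
  using finite_lists_length_eq[of A r] by (simp add: conj_commute)

lemma tuples1: "xs \<in> tuples A 1 \<longleftrightarrow> (\<exists>x. xs = [x] \<and> x \<in> A)"
  unfolding tuples_def by (cases xs) auto

lemma tuples2: "xs \<in> tuples A 2 \<longleftrightarrow> (\<exists>x y. xs = [x, y] \<and> x \<in> A \<and> y \<in> A)"
  unfolding tuples_def
  by (cases xs; cases "tl xs") (auto simp: numeral_2_eq_2)

lemma soft_ge0: "soft R xs \<ge> 0" by (simp add: soft_def)

lemma min0:
  fixes g :: "nat list \<Rightarrow> real"
  assumes "finite A" "\<And>x. x \<in> A \<Longrightarrow> g x \<ge> 0" "a \<in> A" "g a = 0"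
  shows "Min (g ` A) = 0"
  apply (rule Min_eqI)
  using assms by (auto intro: rev_image_eqI)

lemma G:
  assumes "\<And>x y. x \<in> set X \<Longrightarrow> y \<in> set Y \<Longrightarrow> g x y \<in> B"
  shows "set (map2 g X Y) \<subseteq> B"
  using assms by (auto dest: set_zip_leftD set_zip_rightD)

lemma M1: "set (map2 kmeet X Y) - {0} \<subseteq> set X \<inter> set Y"
proof -
  have "set (map2 kmeet X Y) \<subseteq> {0} \<union> (set X \<inter> set Y)"
    by (rule G) (auto simp: kmeet_def)
  then show ?thesis by auto
qed

lemma J1: "set (map2 kjoin X Y) - {0} \<subseteq> set X \<union> set Y"
proof -
  have "set (map2 kjoin X Y) \<subseteq> {0} \<union> (set X \<union> set Y)"
    by (rule G) (auto simp: kjoin_def)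
  then show ?thesis by auto
qed

lemma J2: "0 \<notin> set Y \<Longrightarrow> set (map2 kjoin X Y) - {0} \<subseteq> set Y"
proof -
  assume a: "0 \<notin> set Y"
  have "set (map2 kjoin X Y) \<subseteq> {0} \<union> set Y"
    by (rule G) (use a in \<open>auto simp: kjoin_def\<close>)
  then show ?thesis by auto
qed

lemma meet_comm: "map2 kmeet X Y = map2 kmeet Y X"
proof (induction X arbitrary: Y)
  case Nil then show ?case by simp
next
  case (Cons a X) then show ?case by (cases Y) (auto simp: kmeet_def)
qed

lemma join_comm: "map2 kjoin X Y = map2 kjoin Y X"
proof (induction X arbitrary: Y)
  case Nil then show ?case by simp
next
  case (Cons a X) then show ?case by (cases Y) (auto simp: kjoin_def)
qed

definition eqrel :: "nat list \<Rightarrow> real" where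
  "eqrel xs = (if card (set xs - {0}) \<ge> 2 then 1
     else if set xs - {0} \<noteq> {} \<and> 0 \<in> set xs then 1/2 else 0)"

lemma eqrel_half: "set xs - {0} \<subseteq> {a} \<Longrightarrow> eqrel xs \<le> 1/2"
proof -
  assume "set xs - {0} \<subseteq> {a}"
  then have "card (set xs - {0}) \<le> card {a}" by (intro card_mono) auto
  then show ?thesis by (auto simp: eqrel_def)
qed

lemma eqrel_le1: "eqrel xs \<le> 1" by (auto simp: eqrel_def)
lemma eqrel_ge0: "eqrel xs \<ge> 0" by (auto simp: eqrel_def)

lemma eqrel_int: "2 * eqrel xs \<in> \<int>" by (auto simp: eqrel_def)

lemma eqrel_zero: "set xs \<subseteq> {c} \<Longrightarrow> eqrel xs = 0"
proof -
  assume a: "set xs \<subseteq> {c}"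
  then have "card (set xs - {0}) \<le> card {c}" by (intro card_mono) auto
  then show ?thesis using a by (auto simp: eqrel_def)
qed

lemma eqrel_empty: "set xs - {0} = {} \<Longrightarrow> eqrel xs = 0"
  by (rule eqrel_zero[of _ 0]) auto

lemma eqrel_cases:
  "eqrel xs = 1 \<or> (eqrel xs = 0 \<and> (\<exists>c. set xs \<subseteq> {c}))
    \<or> (eqrel xs = 1/2 \<and> 0 \<in> set xs \<and> (\<exists>a. a \<noteq> 0 \<and> set xs - {0} = {a}))"
proof (cases "card (set xs - {0}) \<ge> 2")
  case True then show ?thesis by (simp add: eqrel_def)
next
  case False
  then have "card (set xs - {0}) \<le> Suc 0" by simp
  then have u: "\<forall>a\<in>set xs - {0}. \<forall>b\<in>set xs - {0}. a = b"
    using card_le_Suc0_iff_eq[of "set xs - {0}"] by simp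
  show ?thesis
  proof (cases "set xs - {0} = {}")
    case True
    then have "set xs \<subseteq> {0}" by auto
    then show ?thesis using eqrel_zero by blast
  next
    case F: False
    then obtain a where a1: "a \<in> set xs - {0}" by (meson ex_in_conv)
    have a: "set xs - {0} = {a}"
    proof
      show "set xs - {0} \<subseteq> {a}"
      proof
        fix x assume "x \<in> set xs - {0}"
        then have "x = a" using u a1 by (meson bspec)
        then show "x \<in> {a}" by simp
      qed
      show "{a} \<subseteq> set xs - {0}" using a1 by simp
    qed
    have a0: "a \<noteq> 0" using a1 by simp
    show ?thesis
    proof (cases "0 \<in> set xs")
      case True
      then show ?thesis using a a0 False by (auto simp: eqrel_def)
    next
      case False
      then have "set xs \<subseteq> {a}" using a by auto
      then show ?thesis using eqrel_zero by blast
    qed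
  qed
qed

lemma aux:
  assumes X1: "eqrel X = 1"
  shows "eqrel (map2 kmeet X Y) + eqrel (map2 kjoin X Y) \<le> eqrel X + eqrel Y"
proof -
  let ?M = "map2 kmeet X Y" and ?J = "map2 kjoin X Y"
  consider "eqrel Y = 1" | c where "eqrel Y = 0" "set Y \<subseteq> {c}"
    | a where "eqrel Y = 1/2" "0 \<in> set Y" "set Y - {0} = {a}"
    using eqrel_cases[of Y] by blast
  then show ?thesis
  proof cases
    case 1 then show ?thesis using X1 eqrel_le1[of ?M] eqrel_le1[of ?J] by simp
  next
    case (2 c)
    show ?thesis
    proof (cases "c = 0")
      case True
      then have "set ?M - {0} = {}" using M1[of X Y] 2 by blast
      then have "eqrel ?M = 0" by (rule eqrel_empty)
      then show ?thesis using X1 eqrel_le1[of ?J] eqrel_ge0[of Y] by simp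
    next
      case False
      then have "0 \<notin> set Y" using 2 by auto
      then have "set ?J - {0} \<subseteq> {c}" using J2[of Y X] 2 by blast
      then have j: "eqrel ?J \<le> 1/2" by (rule eqrel_half)
      have "set ?M - {0} \<subseteq> {c}" using M1[of X Y] 2 by blast
      then have "eqrel ?M \<le> 1/2" by (rule eqrel_half)
      then show ?thesis using X1 j eqrel_ge0[of Y] by simp
    qed
  next
    case (3 a)
    have "set ?M - {0} \<subseteq> {a}" using M1[of X Y] 3 by blast
    then have "eqrel ?M \<le> 1/2" by (rule eqrel_half)
    then show ?thesis using X1 3 eqrel_le1[of ?J] by simp
  qed
qed

lemma half_const:
  assumes "eqrel X = 1/2" "0 \<in> set X" "set X - {0} = {a}" "eqrel Y = 0" "set Y \<subseteq> {e}"
  shows "eqrel (map2 kmeet X Y) + eqrel (map2 kjoin X Y) \<le> eqrel X + eqrel Y"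
proof -
  let ?M = "map2 kmeet X Y" and ?J = "map2 kjoin X Y"
  show ?thesis
  proof (cases "e = 0")
    case True
    then have "set ?M - {0} = {}" using M1[of X Y] assms by blast
    then have m: "eqrel ?M = 0" by (rule eqrel_empty)
    have "set ?J - {0} \<subseteq> {a}" using J1[of X Y] assms True by blast
    then have "eqrel ?J \<le> 1/2" by (rule eqrel_half)
    then show ?thesis using m assms by simp
  next
    case False
    then have Y0: "0 \<notin> set Y" using assms by auto
    show ?thesis
    proof (cases "e = a")
      case True
      have "set ?J \<subseteq> {a}"
        by (rule G) (use assms True False in \<open>auto simp: kjoin_def\<close>)
      then have j: "eqrel ?J = 0" by (rule eqrel_zero)
      have "set ?M - {0} \<subseteq> {a}" using M1[of X Y] assms by blast
      then have "eqrel ?M \<le> 1/2" by (rule eqrel_half)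
      then show ?thesis using j assms by simp
    next
      case ne: False
      have "set ?M - {0} \<subseteq> (set X - {0}) \<inter> (set Y - {0})" using M1[of X Y] by blast
      moreover have "set Y - {0} \<subseteq> {e}" using assms by blast
      ultimately have "set ?M - {0} = {}" using assms(3) ne by blast
      then have m: "eqrel ?M = 0" by (rule eqrel_empty)
      have "set ?J - {0} \<subseteq> {e}" using J2[OF Y0, of X] assms by blast
      then have "eqrel ?J \<le> 1/2" by (rule eqrel_half)
      then show ?thesis using m assms by simp
    qed
  qed
qed

lemma both_const:
  assumes "set X \<subseteq> {c}" "set Y \<subseteq> {e}"
  shows "eqrel (map2 kmeet X Y) + eqrel (map2 kjoin X Y) \<le> eqrel X + eqrel Y"
proof -
  have "set (map2 kmeet X Y) \<subseteq> {kmeet c e}" by (rule G) (use assms in auto)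
  then have m: "eqrel (map2 kmeet X Y) = 0" by (rule eqrel_zero)
  have "set (map2 kjoin X Y) \<subseteq> {kjoin c e}" by (rule G) (use assms in auto)
  then have "eqrel (map2 kjoin X Y) = 0" by (rule eqrel_zero)
  then show ?thesis using m eqrel_ge0[of X] eqrel_ge0[of Y] by simp
qed

lemma half_const_sym:
  assumes "eqrel Y = 1/2" "0 \<in> set Y" "set Y - {0} = {a}" "eqrel X = 0" "set X \<subseteq> {c}"
  shows "eqrel (map2 kmeet X Y) + eqrel (map2 kjoin X Y) \<le> eqrel X + eqrel Y"
  using half_const[OF assms] meet_comm[of X Y] join_comm[of X Y] by simp

lemma both_half:
  assumes "eqrel X = 1/2" "set X - {0} = {a}" "eqrel Y = 1/2" "set Y - {0} = {b}"
  shows "eqrel (map2 kmeet X Y) + eqrel (map2 kjoin X Y) \<le> eqrel X + eqrel Y"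
proof -
  let ?M = "map2 kmeet X Y" and ?J = "map2 kjoin X Y"
  show ?thesis
  proof (cases "a = b")
    case True
    have "set ?M - {0} \<subseteq> {a}" using M1[of X Y] assms by blast
    then have m: "eqrel ?M \<le> 1/2" by (rule eqrel_half)
    have "set ?J - {0} \<subseteq> {a}" using J1[of X Y] assms True by blast
    then have "eqrel ?J \<le> 1/2" by (rule eqrel_half)
    then show ?thesis using m assms by simp
  next
    case False
    have "set ?M - {0} \<subseteq> (set X - {0}) \<inter> (set Y - {0})" using M1[of X Y] by blast
    then have "set ?M - {0} = {}" using assms False by auto
    then have m: "eqrel ?M = 0" by (rule eqrel_empty)
    then show ?thesis using assms eqrel_le1[of ?J] by simp
  qed
qed

lemma eqrel_sub:
  "eqrel (map2 kmeet X Y) + eqrel (map2 kjoin X Y) \<le> eqrel X + eqrel Y"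
proof (cases "eqrel X = 1")
  case True then show ?thesis by (rule aux)
next
  case nX: False
  show ?thesis
  proof (cases "eqrel Y = 1")
    case True
    then show ?thesis using aux[of Y X] meet_comm[of X Y] join_comm[of X Y] by simp
  next
    case nY: False
    have cx: "(eqrel X = 0 \<and> (\<exists>c. set X \<subseteq> {c}))
      \<or> (eqrel X = 1/2 \<and> 0 \<in> set X \<and> (\<exists>a. a \<noteq> 0 \<and> set X - {0} = {a}))"
      using eqrel_cases[of X] nX by blast
    have cy: "(eqrel Y = 0 \<and> (\<exists>c. set Y \<subseteq> {c}))
      \<or> (eqrel Y = 1/2 \<and> 0 \<in> set Y \<and> (\<exists>a. a \<noteq> 0 \<and> set Y - {0} = {a}))"
      using eqrel_cases[of Y] nY by blast
    show ?thesis
      using cx cy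
      apply (elim disjE conjE exE)
         apply (rule both_const; assumption)
        apply (rule half_const_sym; assumption)
       apply (rule half_const; assumption)
      apply (rule both_half; assumption)
      done
  qed
qed


lemma eqrel_nz: "0 \<notin> set xs \<Longrightarrow> eqrel xs = (if card (set xs) \<ge> 2 then 1 else 0)"
proof -
  assume "0 \<notin> set xs"
  then have "set xs - {0} = set xs" by auto
  then show ?thesis using \<open>0 \<notin> set xs\<close> by (simp add: eqrel_def)
qed

lemma allnth: "(\<forall>i<length xs. \<forall>j<length xs. xs!i = xs!j) \<longleftrightarrow> (\<forall>a\<in>set xs. \<forall>b\<in>set xs. a = b)"
  by (metis in_set_conv_nth nth_mem)

lemma card2: "card (set xs) \<ge> 2 \<longleftrightarrow> \<not> (\<forall>a\<in>set xs. \<forall>b\<in>set xs. a = b)"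
  using card_le_Suc0_iff_eq[of "set xs"] by auto

lemma part4:
  assumes "k \<ge> 1"
  shows "\<exists>f'. let f = soft (\<lambda>xs. \<forall>i<r. \<forall>j<r. xs ! i = xs ! j) in
           discrete_relaxation k r f f' \<and> k_submodular k r f' \<and> half_integral k r f'"
proof (rule exI[of _ eqrel], unfold Let_def, intro conjI)
  let ?f = "soft (\<lambda>xs. \<forall>i<r. \<forall>j<r. xs ! i = xs ! j)"
  have eq: "eqrel x = ?f x" if "x \<in> tuples {1..k} r" for x
  proof -
    have l: "length x = r" and s: "set x \<subseteq> {1..k}" using that by (auto simp: tuples_def)
    then have "0 \<notin> set x" by auto
    have c: "(\<forall>i<r. \<forall>j<r. x!i = x!j) \<longleftrightarrow> \<not> card (set x) \<ge> 2"
      using allnth[of x] card2[of x] l by blast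
    show ?thesis unfolding eqrel_nz[OF \<open>0 \<notin> set x\<close>] soft_def c by simp
  qed
  have rep: "replicate r 1 \<in> tuples {1..k} r" using assms by (auto simp: tuples_def)
  have rep0: "replicate r 1 \<in> tuples {0..k} r" using assms by (auto simp: tuples_def)
  have z: "eqrel (replicate r 1) = 0" by (rule eqrel_zero[of _ 1]) auto
  have "Min (eqrel ` tuples {0..k} r) = 0"
    by (rule min0[where a="replicate r 1"], rule finite_tuples, simp, rule eqrel_ge0, rule rep0, rule z)
  moreover have "Min (?f ` tuples {1..k} r) = 0"
    by (rule min0[where a="replicate r 1"], rule finite_tuples, simp, rule soft_ge0, rule rep, simp add: soft_def)
  ultimately show "discrete_relaxation k r ?f eqrel"
    unfolding discrete_relaxation_def using eq by simp
  show "k_submodular k r eqrel" unfolding k_submodular_def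
    by (intro ballI eqrel_sub)
  show "half_integral k r eqrel" unfolding half_integral_def
    by (intro ballI eqrel_int)
qed


lemma nz: fixes p :: "nat \<Rightarrow> nat" assumes "p ` {1..k} \<subseteq> {1..k}" "a \<in> {0..k}" "a \<noteq> 0" shows "p a \<noteq> 0"
proof -
  have "a \<in> {1..k}" using assms(2,3) by auto
  then have "p a \<in> {1..k}" using assms(1) by blast
  then show ?thesis by auto
qed
definition ext :: "(nat \<Rightarrow> nat) \<Rightarrow> nat \<Rightarrow> nat" where
  "ext p y = (if y = 0 then 0 else p y)"
lemma ext_meet:
  assumes "inj_on p {1..k}" "p ` {1..k} \<subseteq> {1..k}" "a \<in> {0..k}" "b \<in> {0..k}"
  shows "ext p (kmeet a b) = kmeet (ext p a) (ext p b)"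
proof -
  have "a \<noteq> 0 \<Longrightarrow> p a \<noteq> 0" "b \<noteq> 0 \<Longrightarrow> p b \<noteq> 0" using nz[OF assms(2)] assms(3,4) by blast+
  moreover have "a \<noteq> b \<Longrightarrow> a \<noteq> 0 \<Longrightarrow> b \<noteq> 0 \<Longrightarrow> p a \<noteq> p b"
    using assms(1,3,4) unfolding inj_on_def by (metis atLeastAtMost_iff less_one linorder_not_le)
  ultimately show ?thesis
    by (cases "a = 0"; cases "b = 0"; cases "a = b") (simp_all add: ext_def kmeet_def)
qed
lemma ext_join:
  assumes "inj_on p {1..k}" "p ` {1..k} \<subseteq> {1..k}" "a \<in> {0..k}" "b \<in> {0..k}"
  shows "ext p (kjoin a b) = kjoin (ext p a) (ext p b)"
proof -
  have "a \<noteq> 0 \<Longrightarrow> p a \<noteq> 0" "b \<noteq> 0 \<Longrightarrow> p b \<noteq> 0" using nz[OF assms(2)] assms(3,4) by blast+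
  moreover have "a \<noteq> b \<Longrightarrow> a \<noteq> 0 \<Longrightarrow> b \<noteq> 0 \<Longrightarrow> p a \<noteq> p b"
    using assms(1,3,4) unfolding inj_on_def by (metis atLeastAtMost_iff less_one linorder_not_le)
  ultimately show ?thesis
    by (cases "a = 0"; cases "b = 0"; cases "a = b") (simp_all add: ext_def kjoin_def)
qed




lemma part1:
  fixes f :: "nat list \<Rightarrow> real"
  assumes k2: "k \<ge> 2"
  shows "\<exists>f'. discrete_relaxation k 1 f f' \<and> k_submodular k 1 f' \<and>
        ((\<forall>x \<in> tuples {1..k} 1. f x \<in> \<int>) \<longrightarrow> half_integral k 1 f')"
proof -
  define P where "P = {p \<in> {1..k} \<times> {1..k}. fst p \<noteq> snd p}"
  define h where "h = (\<lambda>p. (f [fst p] + f [snd p]) / 2)"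
  define c where "c = Min (h ` P)"
  define T1 where "T1 = tuples {1..k} 1"
  have finP: "finite P" unfolding P_def by (rule finite_subset[of _ "{1..k} \<times> {1..k}"]) auto
  have "(1, 2) \<in> P" using k2 by (simp add: P_def)
  then have Pne: "P \<noteq> {}" by blast
  have cle: "c \<le> h (a, b)" if "a \<in> {1..k}" "b \<in> {1..k}" "a \<noteq> b" for a b
  proof -
    have "(a, b) \<in> P" using that by (simp add: P_def)
    then show ?thesis unfolding c_def using finP by (intro Min_le) auto
  qed
  have "c \<in> h ` P" unfolding c_def using finP Pne by (intro Min_in) auto
  then obtain a b where ab: "a \<in> {1..k}" "b \<in> {1..k}" "c = (f [a] + f [b]) / 2"
    unfolding P_def h_def by auto
  define g where "g = (\<lambda>xs. if xs = [0] then c else f xs)"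
  have finT1: "finite T1" unfolding T1_def by (rule finite_tuples) simp
  have one: "[1] \<in> T1" using k2 by (simp add: T1_def tuples_def)
  have T0: "tuples {0..k} 1 = insert [0] T1"
  proof -
    have "x \<in> {0..k} \<longleftrightarrow> x = 0 \<or> x \<in> {1..k}" for x :: nat by auto
    then show ?thesis unfolding T1_def set_eq_iff insert_iff tuples1 by auto
  qed
  have n0: "[0] \<notin> T1" by (simp add: T1_def tuples_def)
  have on1: "g x = f x" if "x \<in> T1" for x using that n0 unfolding g_def by auto
  have img: "g ` tuples {0..k} 1 = insert c (f ` T1)"
  proof -
    have "g ` T1 = f ` T1" using on1 by (rule image_cong[OF refl])
    moreover have "g [0] = c" by (simp add: g_def)
    ultimately show ?thesis unfolding T0 image_insert by simp
  qed
  have Mle: "Min (f ` T1) \<le> f x" if "x \<in> T1" for x using finT1 that by (intro Min_le) auto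
  have aT: "[a] \<in> T1" "[b] \<in> T1" using ab by (auto simp: T1_def tuples_def)
  have "Min (f ` T1) \<le> c" using Mle[OF aT(1)] Mle[OF aT(2)] ab(3) by simp
  then have "Min (g ` tuples {0..k} 1) = Min (f ` T1)"
    unfolding img using finT1 one by (subst Min_insert) auto
  then have dr: "discrete_relaxation k 1 f g"
    unfolding discrete_relaxation_def using on1 by (simp add: T1_def)
  have sm: "k_submodular k 1 g" unfolding k_submodular_def
  proof (intro ballI)
    fix X Y assume X: "X \<in> tuples {0..k} 1" and Y: "Y \<in> tuples {0..k} 1"
    obtain x where x: "X = [x]" "x \<in> {0..k}" using X[unfolded tuples1] by blast
    obtain y where y: "Y = [y]" "y \<in> {0..k}" using Y[unfolded tuples1] by blast
    show "g X + g Y \<ge> g (map2 kmeet X Y) + g (map2 kjoin X Y)"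
    proof (cases "x = y \<or> x = 0 \<or> y = 0")
      case True
      then show ?thesis using x y by (auto simp: kmeet_def kjoin_def)
    next
      case False
      then have xy: "x \<in> {1..k}" "y \<in> {1..k}" "x \<noteq> y" using x y by auto
      have m: "map2 kmeet X Y = [0]" "map2 kjoin X Y = [0]" using x y False
        by (auto simp: kmeet_def kjoin_def)
      have "g X = f [x]" "g Y = f [y]" using x y False by (auto simp: g_def)
      then show ?thesis using m cle[OF xy] by (simp add: g_def h_def)
    qed
  qed
  have hi: "half_integral k 1 g" if ints: "\<forall>x \<in> tuples {1..k} 1. f x \<in> \<int>"
    unfolding half_integral_def
  proof
    fix x assume "x \<in> tuples {0..k} 1"
    then have "x = [0] \<or> x \<in> T1" unfolding T0 by blast
    then show "2 * g x \<in> \<int>"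
    proof
      assume "x = [0]"
      then have "2 * g x = f [a] + f [b]" using ab(3) by (simp add: g_def)
      moreover have "f [a] \<in> \<int>" "f [b] \<in> \<int>" using ints aT by (auto simp: T1_def)
      ultimately show ?thesis by simp
    next
      assume xt: "x \<in> T1"
      then have "f x \<in> \<int>" using ints by (simp add: T1_def)
      then show ?thesis using on1[OF xt] by simp
    qed
  qed
  show ?thesis using dr sm hi by blast
qed


lemma part2:
  assumes "k \<ge> 1" "bij_betw \<pi> {1..k} {1..k}"
  shows "\<exists>f'. let f = soft (\<lambda>xs. xs ! 0 = \<pi> (xs ! 1)) in
           discrete_relaxation k 2 f f' \<and> k_submodular k 2 f' \<and> half_integral k 2 f'"
proof (rule exI[of _ "\<lambda>xs. eqrel [xs!0, ext \<pi> (xs!1)]"], unfold Let_def, intro conjI)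
  let ?g = "\<lambda>xs. eqrel [xs!0, ext \<pi> (xs!1)]"
  let ?f = "soft (\<lambda>xs. xs ! 0 = \<pi> (xs ! 1))"
  have inj: "inj_on \<pi> {1..k}" using assms(2) by (rule bij_betw_imp_inj_on)
  have img: "\<pi> ` {1..k} \<subseteq> {1..k}" using bij_betw_imp_surj_on[OF assms(2)] by (rule equalityD1)
  have eq: "?g x = ?f x" if xin: "x \<in> tuples {1..k} 2" for x
  proof -
    obtain a b where x: "x = [a, b]" "a \<in> {1..k}" "b \<in> {1..k}" using xin[unfolded tuples2] by blast
    then have pb: "\<pi> b \<in> {1..k}" using img by blast
    then have "0 \<notin> set [a, \<pi> b]" using x by auto
    then have e: "eqrel [a, \<pi> b] = (if card {a, \<pi> b} \<ge> 2 then 1 else 0)" using eqrel_nz by simp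
    have b0: "b \<noteq> 0" using x by auto
    show ?thesis using x b0 e by (cases "a = \<pi> b") (simp_all add: ext_def soft_def)
  qed
  have o1: "(1::nat) \<in> {1..k}" using assms(1) by simp
  then have p1: "\<pi> 1 \<in> {1..k}" using img by blast
  have w1: "[\<pi> 1, 1] \<in> tuples {1..k} 2" using p1 assms(1) by (auto simp: tuples_def)
  have w0: "[\<pi> 1, 1] \<in> tuples {0..k} 2" using p1 assms(1) by (auto simp: tuples_def)
  have z: "?g [\<pi> 1, 1] = 0" by (simp add: ext_def eqrel_zero)
  have m1: "Min (?g ` tuples {0..k} 2) = 0"
    by (rule min0[where a="[\<pi> 1, 1]"], rule finite_tuples, simp, rule eqrel_ge0, rule w0, rule z)
  have m2: "Min (?f ` tuples {1..k} 2) = 0"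
    by (rule min0[where a="[\<pi> 1, 1]"], rule finite_tuples, simp, rule soft_ge0, rule w1, simp add: soft_def)
  show "discrete_relaxation k 2 ?f ?g"
    unfolding discrete_relaxation_def using eq m1 m2 by simp
  show "k_submodular k 2 ?g" unfolding k_submodular_def
  proof (intro ballI)
    fix X Y assume X: "X \<in> tuples {0..k} 2" and Y: "Y \<in> tuples {0..k} 2"
    obtain x1 x2 where x: "X = [x1, x2]" "x1 \<in> {0..k}" "x2 \<in> {0..k}" using X[unfolded tuples2] by blast
    obtain y1 y2 where y: "Y = [y1, y2]" "y1 \<in> {0..k}" "y2 \<in> {0..k}" using Y[unfolded tuples2] by blast
    have s: "eqrel (map2 kmeet [x1, ext \<pi> x2] [y1, ext \<pi> y2]) + eqrel (map2 kjoin [x1, ext \<pi> x2] [y1, ext \<pi> y2])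
      \<le> eqrel [x1, ext \<pi> x2] + eqrel [y1, ext \<pi> y2]" by (rule eqrel_sub)
    show "?g X + ?g Y \<ge> ?g (map2 kmeet X Y) + ?g (map2 kjoin X Y)"
      using s x y ext_meet[OF inj img x(3) y(3)] ext_join[OF inj img x(3) y(3)] by simp
  qed
  show "half_integral k 2 ?g" unfolding half_integral_def
    by (intro ballI eqrel_int)
qed



definition g3 :: "nat \<Rightarrow> nat \<Rightarrow> nat \<Rightarrow> nat \<Rightarrow> real" where
 "g3 d d' a b = (if a = d \<or> b = d' then 0 else if a = 0 \<and> b = 0 then 0 else if a = 0 \<or> b = 0 then 1/2 else 1)"

lemma g3_sub: assumes "d \<noteq> 0" "d' \<noteq> 0"
  shows "g3 d d' (kmeet x1 y1) (kmeet x2 y2) + g3 d d' (kjoin x1 y1) (kjoin x2 y2) \<le> g3 d d' x1 x2 + g3 d d' y1 y2"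
  using assms unfolding g3_def kmeet_def kjoin_def by (simp split: if_splits)

lemma part3:
  assumes "d \<in> {1..k}" "d' \<in> {1..k}"
  shows "\<exists>f'. let f = soft (\<lambda>xs. xs ! 0 = d \<or> xs ! 1 = d') in
           discrete_relaxation k 2 f f' \<and> k_submodular k 2 f' \<and> half_integral k 2 f'"
proof (rule exI[of _ "\<lambda>xs. g3 d d' (xs!0) (xs!1)"], unfold Let_def, intro conjI)
  let ?g = "\<lambda>xs. g3 d d' (xs!0) (xs!1)"
  let ?f = "soft (\<lambda>xs. xs ! 0 = d \<or> xs ! 1 = d')"
  have eq: "?g x = ?f x" if xin: "x \<in> tuples {1..k} 2" for x
  proof -
    obtain a b where x: "x = [a, b]" "a \<in> {1..k}" "b \<in> {1..k}" using xin[unfolded tuples2] by blast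
    then have "a \<noteq> 0" "b \<noteq> 0" by auto
    then show ?thesis using x by (simp add: g3_def soft_def)
  qed
  have w1: "[d, d'] \<in> tuples {1..k} 2" using assms by (auto simp: tuples_def)
  have w0: "[d, d'] \<in> tuples {0..k} 2" using assms by (auto simp: tuples_def)
  have z: "?g [d, d'] = 0" by (simp add: g3_def)
  have ge: "?g x \<ge> 0" for x by (simp add: g3_def)
  have m1: "Min (?g ` tuples {0..k} 2) = 0"
    by (rule min0[where a="[d, d']"], rule finite_tuples, simp, rule ge, rule w0, rule z)
  have m2: "Min (?f ` tuples {1..k} 2) = 0"
    by (rule min0[where a="[d, d']"], rule finite_tuples, simp, rule soft_ge0, rule w1, simp add: soft_def)
  show "discrete_relaxation k 2 ?f ?g"
    unfolding discrete_relaxation_def using eq m1 m2 by simp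
  have d0: "d \<noteq> 0" "d' \<noteq> 0" using assms by auto
  show "k_submodular k 2 ?g" unfolding k_submodular_def
  proof (intro ballI)
    fix X Y assume X: "X \<in> tuples {0..k} 2" and Y: "Y \<in> tuples {0..k} 2"
    obtain x1 x2 where x: "X = [x1, x2]" using X[unfolded tuples2] by blast
    obtain y1 y2 where y: "Y = [y1, y2]" using Y[unfolded tuples2] by blast
    show "?g X + ?g Y \<ge> ?g (map2 kmeet X Y) + ?g (map2 kjoin X Y)"
      using g3_sub[OF d0, of x1 y1 x2 y2] x y by simp
  qed
  show "half_integral k 2 ?g" unfolding half_integral_def
    by (simp add: g3_def)
qed

theorem lemma3:
  fixes k :: nat
  assumes "k \<ge> 2"
  shows
   "(\<forall>f :: nat list \<Rightarrow> real. \<exists>f'. discrete_relaxation k 1 f f' \<and> k_submodular k 1 f' \<and>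
        ((\<forall>x \<in> tuples {1..k} 1. f x \<in> \<int>) \<longrightarrow> half_integral k 1 f'))
  \<and> (\<forall>\<pi> :: nat \<Rightarrow> nat. bij_betw \<pi> {1..k} {1..k} \<longrightarrow>
        (\<exists>f'. let f = soft (\<lambda>xs. xs ! 0 = \<pi> (xs ! 1)) in
           discrete_relaxation k 2 f f' \<and> k_submodular k 2 f' \<and> half_integral k 2 f'))
  \<and> (\<forall>d \<in> {1..k}. \<forall>d' \<in> {1..k}.
        (\<exists>f'. let f = soft (\<lambda>xs. xs ! 0 = d \<or> xs ! 1 = d') in
           discrete_relaxation k 2 f f' \<and> k_submodular k 2 f' \<and> half_integral k 2 f'))
  \<and> (\<forall>r :: nat.
        (\<exists>f'. let f = soft (\<lambda>xs. \<forall>i<r. \<forall>j<r. xs ! i = xs ! j) in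
           discrete_relaxation k r f f' \<and> k_submodular k r f' \<and> half_integral k r f'))"
  proof (intro conjI)
  have k1: "k \<ge> 1" using assms by simp
  show "\<forall>f :: nat list \<Rightarrow> real. \<exists>f'. discrete_relaxation k 1 f f' \<and> k_submodular k 1 f' \<and>
        ((\<forall>x \<in> tuples {1..k} 1. f x \<in> \<int>) \<longrightarrow> half_integral k 1 f')"
    using part1[OF assms] by blast
  show "\<forall>\<pi> :: nat \<Rightarrow> nat. bij_betw \<pi> {1..k} {1..k} \<longrightarrow>
        (\<exists>f'. let f = soft (\<lambda>xs. xs ! 0 = \<pi> (xs ! 1)) in
           discrete_relaxation k 2 f f' \<and> k_submodular k 2 f' \<and> half_integral k 2 f')"
    using part2[OF k1] by blast
  show "\<forall>d \<in> {1..k}. \<forall>d' \<in> {1..k}.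
        (\<exists>f'. let f = soft (\<lambda>xs. xs ! 0 = d \<or> xs ! 1 = d') in
           discrete_relaxation k 2 f f' \<and> k_submodular k 2 f' \<and> half_integral k 2 f')"
    using part3 by blast
  show "\<forall>r :: nat.
        (\<exists>f'. let f = soft (\<lambda>xs. \<forall>i<r. \<forall>j<r. xs ! i = xs ! j) in
           discrete_relaxation k r f f' \<and> k_submodular k r f' \<and> half_integral k r f')"
    using part4[OF k1] by blast
qed

end
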